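(* Let $(E,\mathcal{I})$ be a $p$-system for an integer $p\ge 1$. Suppose the utility function $f:2^E\times O^E\to\mathbb{R}_{\ge0}$ is worst-case monotone and worst-case submodular with respect to the prior $p(\phi)$, and satisfies minimal dependency. Let $\pi^w$ be the adaptive worst-case greedy policy for $(E,\mathcal{I})$ and let $\pi^*_{wc}$ be an optimal worst-case policy for $(E,\mathcal{I})$. Then $$f_{wc}(\pi^w)\ \ge\ \frac{1}{p+1}\,f_{wc}(\pi^*_{wc}).$$
   Context: Setting. $E$ is a finite set of $n$ items and $O$ a finite set of states. A realization is a function $\phi:E\to O$; $p$ is a probability distribution (prior) on the set of all realizations, $\Phi$ denotes a random realization with law $p$, and $U^+=\{\phi: p(\phi)>0\}$. A partial realization is a function $\psi:S\to O$ with $S\subseteq E$, $\mathrm{dom}(\psi)=S$; it is identified with the set of pairs $\{(e,\psi(e)):e\in S\}$, so $\psi\subseteq\psi'$ means $\mathrm{dom}(\psi)\subseteq\mathrm{dom}(\psi')$ and they agree on $\mathrm{dom}(\psi)$. A realization $\phi$ is consistent with $\psi$, written $\phi\sim\psi$, if it agrees with $\psi$ on $\mathrm{dom}(\psi)$. Only partial realizations with $\Pr[\Phi\sim\psi]>0$ are considered, and $p(\phi\mid\psi)=\Pr[\Phi=\phi\mid\Phi\sim\psi]$. For $S\subseteq E$ and a partial realization $\psi$, $f(S,\psi)=\mathbb{E}[f(S,\Phi)\mid\Phi\sim\psi]$. For $e\notin\mathrm{dom}(\psi)$, let $O(e,\psi)=\{o\in O:\exists\phi\text{ with }p(\phi\mid\psi)>0,\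 \phi(e)=o\}$ and define the worst-case marginal utility $f_{wc}(e\mid\psi)=\min_{o\in O(e,\psi)}\{f(\mathrm{dom}(\psi)\cup\{e\},\psi\cup\{(e,o)\})-f(\mathrm{dom}(\psi),\psi)\}$. $f$ is worst-case submodular if $f_{wc}(e\mid\psi)\ge f_{wc}(e\mid\psi')$ for all partial realizations $\psi\subseteq\psi'$ and all $e\in E\setminus\mathrm{dom}(\psi')$; it is worst-case monotone if $f_{wc}(e\mid\psi)\ge0$ for all $\psi$ and $e\notin\mathrm{dom}(\psi)$. $f$ satisfies minimal dependency if $f(\mathrm{dom}(\psi),\psi)=f(\mathrm{dom}(\psi),\phi)$ for every partial realization $\psi$ and every $\phi\in U^+$ with $\phi\sim\psi$. Policies. A (deterministic) policy $\pi$ is a rule which, given the current observation (the partial realization of the items selected so far), either selects a new item or stops; after an item $e$ is selected under realization $\phi$, the state $\phi(e)$ is observed. $E(\pi,\phi)$ is the set of items selected by $\pi$ under $\phi$. The worst-case utility is $f_{wc}(\pi)=\min_{\phi\in U^+}f(E(\pi,\phi),\phi)$. Independence systems. $(E,\mathcal{I})$ with $\mathcal{I}\subseteq 2^E$ is an independence system if $\emptyset\in\mathcal{I}$ and $\mathcal{I}$ is downward closed. For $R\subseteq E$, a base of $R$ is a maximal (under inclusion) set $B\subseteq R$ with $B\in\mathcal{I}$. $(E,\mathcal{I})$ is a $p$-system if for every $R\subseteq E$, $p\cdot\min_B|B|\ge\max_B|B|$, the min and max over bases $B$ of $R$. An optimal worst-case policy $\pi^*_{wc}$ for $(E,\mathcal{I})$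 maximizes $f_{wc}(\pi)$ over all policies $\pi$ with $E(\pi,\phi)\in\mathcal{I}$ for all $\phi\in U^+$. Adaptive worst-case greedy policy $\pi^w$: start with $\psi_0=\emptyset$; at step $t=1,2,\dots$ let $V_t=\{e\in E\setminus\mathrm{dom}(\psi_{t-1}): \mathrm{dom}(\psi_{t-1})\cup\{e\}\in\mathcal{I}\}$; if $V_t=\emptyset$ stop; otherwise select $e_t\in\arg\max_{e\in V_t}f_{wc}(e\mid\psi_{t-1})$ (ties broken arbitrarily), observe $\Phi(e_t)$ and set $\psi_t=\psi_{t-1}\cup\{(e_t,\Phi(e_t))\}$. *)

theory Defs
  imports Complex_Main
begin

text \<open>Items are the finite type 'e (E = UNIV), states the finite type 'o (O = UNIV).
  Realizations are total functions 'e => 'o, partial realizations are maps 'e ~=> 'o.\<close>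

definition prior :: "(('e::finite \<Rightarrow> 'o::finite) \<Rightarrow> real) \<Rightarrow> bool" where
  "prior pr \<longleftrightarrow> (\<forall>\<phi>. pr \<phi> \<ge> 0) \<and> (\<Sum>\<phi>\<in>UNIV. pr \<phi>) = 1"

definition consistent :: "('e \<Rightarrow> 'o) \<Rightarrow> ('e \<rightharpoonup> 'o) \<Rightarrow> bool" where
  "consistent \<phi> \<psi> \<longleftrightarrow> (\<forall>e\<in>dom \<psi>. \<psi> e = Some (\<phi> e))"

definition prob_cons :: "(('e::finite \<Rightarrow> 'o::finite) \<Rightarrow> real) \<Rightarrow> ('e \<rightharpoonup> 'o) \<Rightarrow> real" where
  "prob_cons pr \<psi> = (\<Sum>\<phi>\<in>{\<phi>. consistent \<phi> \<psi>}. pr \<phi>)"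

definition valid :: "(('e::finite \<Rightarrow> 'o::finite) \<Rightarrow> real) \<Rightarrow> ('e \<rightharpoonup> 'o) \<Rightarrow> bool" where
  "valid pr \<psi> \<longleftrightarrow> prob_cons pr \<psi> > 0"

definition cond_f :: "(('e::finite \<Rightarrow> 'o::finite) \<Rightarrow> real) \<Rightarrow> ('e set \<Rightarrow> ('e \<Rightarrow> 'o) \<Rightarrow> real)
    \<Rightarrow> 'e set \<Rightarrow> ('e \<rightharpoonup> 'o) \<Rightarrow> real" where
  "cond_f pr f S \<psi> = (\<Sum>\<phi>\<in>{\<phi>. consistent \<phi> \<psi>}. pr \<phi> * f S \<phi>) / prob_cons pr \<psi>"

definition states_at :: "(('e::finite \<Rightarrow> 'o::finite) \<Rightarrow> real) \<Rightarrow> 'e \<Rightarrow> ('e \<rightharpoonup> 'o) \<Rightarrow> 'o set" where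
  "states_at pr e \<psi> = {s. \<exists>\<phi>. pr \<phi> > 0 \<and> consistent \<phi> \<psi> \<and> \<phi> e = s}"

definition fwc_marg :: "(('e::finite \<Rightarrow> 'o::finite) \<Rightarrow> real) \<Rightarrow> ('e set \<Rightarrow> ('e \<Rightarrow> 'o) \<Rightarrow> real)
    \<Rightarrow> 'e \<Rightarrow> ('e \<rightharpoonup> 'o) \<Rightarrow> real" where
  "fwc_marg pr f e \<psi> = Min ((\<lambda>s. cond_f pr f (insert e (dom \<psi>)) (\<psi>(e \<mapsto> s))
                                 - cond_f pr f (dom \<psi>) \<psi>) ` states_at pr e \<psi>)"

definition wc_submodular where
  "wc_submodular pr f \<longleftrightarrow> (\<forall>\<psi> \<psi>' e. valid pr \<psi> \<and> valid pr \<psi>' \<and> \<psi> \<subseteq>\<^sub>m \<psi>' \<and> e \<notin> dom \<psi>'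
      \<longrightarrow> fwc_marg pr f e \<psi> \<ge> fwc_marg pr f e \<psi>')"

definition wc_monotone where
  "wc_monotone pr f \<longleftrightarrow> (\<forall>\<psi> e. valid pr \<psi> \<and> e \<notin> dom \<psi> \<longrightarrow> fwc_marg pr f e \<psi> \<ge> 0)"

definition minimal_dependency where
  "minimal_dependency pr f \<longleftrightarrow> (\<forall>\<psi> \<phi>. valid pr \<psi> \<and> pr \<phi> > 0 \<and> consistent \<phi> \<psi>
      \<longrightarrow> cond_f pr f (dom \<psi>) \<psi> = f (dom \<psi>) \<phi>)"

definition indep_system :: "'e set set \<Rightarrow> bool" where
  "indep_system I \<longleftrightarrow> {} \<in> I \<and> (\<forall>A B. B \<in> I \<and> A \<subseteq> B \<longrightarrow> A \<in> I)"

definition is_base :: "'e set set \<Rightarrow> 'e set \<Rightarrow> 'e set \<Rightarrow> bool" where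
  "is_base I R B \<longleftrightarrow> B \<subseteq> R \<and> B \<in> I \<and> (\<forall>B'. B \<subset> B' \<and> B' \<subseteq> R \<longrightarrow> B' \<notin> I)"

definition p_system :: "nat \<Rightarrow> ('e::finite) set set \<Rightarrow> bool" where
  "p_system k I \<longleftrightarrow> indep_system I \<and>
     (\<forall>R. k * Min (card ` {B. is_base I R B}) \<ge> Max (card ` {B. is_base I R B}))"

text \<open>Re-selecting an already selected item is treated as stopping. Since at most card E items can be
  added, CARD('e) steps suffice to run the policy to completion.\<close>
type_synonym ('e, 'o) policy = "('e \<rightharpoonup> 'o) \<Rightarrow> 'e option"

fun run :: "nat \<Rightarrow> ('e, 'o) policy \<Rightarrow> ('e \<Rightarrow> 'o) \<Rightarrow> ('e \<rightharpoonup> 'o) \<Rightarrow> ('e \<rightharpoonup> 'o)" where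
  "run 0 \<pi> \<phi> \<psi> = \<psi>"
| "run (Suc k) \<pi> \<phi> \<psi> = (case \<pi> \<psi> of None \<Rightarrow> \<psi>
     | Some e \<Rightarrow> if e \<in> dom \<psi> then \<psi> else run k \<pi> \<phi> (\<psi>(e \<mapsto> \<phi> e)))"

definition items_sel :: "('e::finite, 'o) policy \<Rightarrow> ('e \<Rightarrow> 'o) \<Rightarrow> 'e set" where
  "items_sel \<pi> \<phi> = dom (run (card (UNIV :: 'e set)) \<pi> \<phi> Map.empty)"

definition fwc_policy :: "(('e::finite \<Rightarrow> 'o::finite) \<Rightarrow> real) \<Rightarrow> ('e set \<Rightarrow> ('e \<Rightarrow> 'o) \<Rightarrow> real)
    \<Rightarrow> ('e, 'o) policy \<Rightarrow> real" where
  "fwc_policy pr f \<pi> = Min ((\<lambda>\<phi>. f (items_sel \<pi> \<phi>) \<phi>) ` {\<phi>. pr \<phi> > 0})"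

definition feasible :: "'e set set \<Rightarrow> (('e::finite \<Rightarrow> 'o::finite) \<Rightarrow> real) \<Rightarrow> ('e, 'o) policy \<Rightarrow> bool" where
  "feasible I pr \<pi> \<longleftrightarrow> (\<forall>\<phi>. pr \<phi> > 0 \<longrightarrow> items_sel \<pi> \<phi> \<in> I)"

definition optimal_wc_policy where
  "optimal_wc_policy I pr f \<pi> \<longleftrightarrow> feasible I pr \<pi> \<and>
     (\<forall>\<pi>'. feasible I pr \<pi>' \<longrightarrow> fwc_policy pr f \<pi>' \<le> fwc_policy pr f \<pi>)"

definition cand :: "'e set set \<Rightarrow> ('e \<rightharpoonup> 'o) \<Rightarrow> 'e set" where
  "cand I \<psi> = {e. e \<notin> dom \<psi> \<and> insert e (dom \<psi>) \<in> I}"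

definition wc_greedy where
  "wc_greedy I pr f \<pi> \<longleftrightarrow> (\<forall>\<psi>. valid pr \<psi> \<longrightarrow>
     (cand I \<psi> = {} \<longrightarrow> \<pi> \<psi> = None) \<and>
     (cand I \<psi> \<noteq> {} \<longrightarrow> (\<exists>e. \<pi> \<psi> = Some e \<and> e \<in> cand I \<psi> \<and>
        (\<forall>e'\<in>cand I \<psi>. fwc_marg pr f e' \<psi> \<le> fwc_marg pr f e \<psi>))))"

end

theory Submission
  imports Defs
begin


lemma pos_valid:
  assumes "prior pr" "pr \<phi> > 0" "consistent \<phi> \<psi>" shows "valid pr \<psi>"
proof -
  have "pr \<phi> \<le> prob_cons pr \<psi>" unfolding prob_cons_def
    using assms by (intro member_le_sum) (auto simp: prior_def)
  thus ?thesis using assms(2) by (simp add: valid_def)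
qed

lemma valid_ex:
  assumes "prior pr" "valid pr \<psi>" shows "\<exists>\<phi>. pr \<phi> > 0 \<and> consistent \<phi> \<psi>"
proof (rule ccontr)
  assume "\<not> ?thesis"
  hence "\<forall>\<phi>\<in>{\<phi>. consistent \<phi> \<psi>}. pr \<phi> = 0" using assms(1)
    by (force simp: prior_def order.order_iff_strict)
  hence "prob_cons pr \<psi> = 0" by (simp add: prob_cons_def)
  thus False using assms(2) by (simp add: valid_def)
qed

lemma md:
  "minimal_dependency pr f \<Longrightarrow> prior pr \<Longrightarrow> pr \<phi> > 0 \<Longrightarrow> consistent \<phi> \<psi>
   \<Longrightarrow> cond_f pr f (dom \<psi>) \<psi> = f (dom \<psi>) \<phi>"
  using pos_valid unfolding minimal_dependency_def by blast

lemma states_in: "pr \<phi> > 0 \<Longrightarrow> consistent \<phi> \<psi> \<Longrightarrow> \<phi> e \<in> states_at pr e \<psi>"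
  by (auto simp: states_at_def)

lemma consistent_upd: "consistent \<phi> \<psi> \<Longrightarrow> consistent \<phi> (\<psi>(e \<mapsto> \<phi> e))"
  by (auto simp: consistent_def)

lemma fwc_le:
  assumes "prior pr" "minimal_dependency pr f" "pr \<phi> > 0" "consistent \<phi> \<psi>" "e \<notin> dom \<psi>"
  shows "fwc_marg pr f e \<psi> \<le> f (insert e (dom \<psi>)) \<phi> - f (dom \<psi>) \<phi>"
proof -
  let ?g = "\<lambda>s. cond_f pr f (insert e (dom \<psi>)) (\<psi>(e \<mapsto> s)) - cond_f pr f (dom \<psi>) \<psi>"
  have "fwc_marg pr f e \<psi> \<le> ?g (\<phi> e)" unfolding fwc_marg_def
    by (rule Min_le) (auto intro: states_in assms)
  also have "?g (\<phi> e) = f (insert e (dom \<psi>)) \<phi> - f (dom \<psi>) \<phi>"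
    using md[OF assms(2,1,3) consistent_upd[OF assms(4)], of e] md[OF assms(2,1,3,4)] by simp
  finally show ?thesis .
qed

lemma fwc_attain:
  assumes "prior pr" "valid pr \<psi>"
  shows "\<exists>s\<in>states_at pr e \<psi>. fwc_marg pr f e \<psi> =
     cond_f pr f (insert e (dom \<psi>)) (\<psi>(e\<mapsto>s)) - cond_f pr f (dom \<psi>) \<psi>"
proof -
  obtain \<phi> where "pr \<phi>>0" "consistent \<phi> \<psi>" using valid_ex assms by blast
  hence ne: "states_at pr e \<psi> \<noteq> {}" using states_in by blast
  have "fwc_marg pr f e \<psi> \<in> (\<lambda>s. cond_f pr f (insert e (dom \<psi>)) (\<psi>(e\<mapsto>s)) - cond_f pr f (dom \<psi>) \<psi>) ` states_at pr e \<psi>"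
    unfolding fwc_marg_def by (rule Min_in) (use ne in auto)
  thus ?thesis by auto
qed

lemma states_cons: "s \<in> states_at pr e \<psi> \<Longrightarrow> \<exists>\<phi>. pr \<phi> > 0 \<and> consistent \<phi> (\<psi>(e\<mapsto>s))"
  by (auto simp: states_at_def consistent_def)

lemma mono_f:
  assumes pr: "prior pr" and mdp: "minimal_dependency pr f" and mon: "wc_monotone pr f"
    and pos: "pr \<phi> > 0" and ST: "S \<subseteq> T"
  shows "f S \<phi> \<le> f T \<phi>"
proof -
  define rs where "rs S = (\<lambda>x. if x \<in> S then Some (\<phi> x) else None)" for S
  have domrs: "dom (rs S) = S" for S unfolding rs_def dom_def by (auto split: if_split_asm)
  have consrs: "consistent \<phi> (rs S)" for S unfolding rs_def consistent_def dom_def by (auto split: if_split_asm)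
  have step: "f S \<phi> \<le> f (insert e S) \<phi>" if "e \<notin> S" for S e
  proof -
    have "0 \<le> fwc_marg pr f e (rs S)" using mon that pos_valid[OF pr pos consrs] domrs
      unfolding wc_monotone_def by blast
    also have "\<dots> \<le> f (insert e (dom (rs S))) \<phi> - f (dom (rs S)) \<phi>"
      by (rule fwc_le[OF pr mdp pos consrs]) (simp add: domrs that)
    finally show ?thesis by (simp add: domrs)
  qed
  have gen: "finite D \<Longrightarrow> f S \<phi> \<le> f (S \<union> D) \<phi>" for D
  proof (induction D rule: finite_induct)
    case empty thus ?case by simp
  next
    case (insert x D)
    show ?case
    proof (cases "x \<in> S \<union> D")
      case True thus ?thesis using insert by (simp add: insert_absorb)
    next
      case False
      have "f (S \<union> D) \<phi> \<le> f (insert x (S \<union> D)) \<phi>" by (rule step[OF False])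
      thus ?thesis using insert by simp
    qed
  qed
  have "S \<union> (T - S) = T" using ST by auto
  thus ?thesis using gen[of "T - S"] by simp
qed

definition stp :: "('e, 'o) policy \<Rightarrow> ('e \<Rightarrow> 'o) \<Rightarrow> ('e \<rightharpoonup> 'o) \<Rightarrow> ('e \<rightharpoonup> 'o)" where
  "stp \<pi> \<phi> \<psi> = (case \<pi> \<psi> of None \<Rightarrow> \<psi> | Some e \<Rightarrow> if e \<in> dom \<psi> then \<psi> else \<psi>(e \<mapsto> \<phi> e))"

lemma run_Suc2: "run (Suc t) \<pi> \<phi> \<psi> = stp \<pi> \<phi> (run t \<pi> \<phi> \<psi>)"
proof (induction t arbitrary: \<psi>)
  case 0 thus ?case by (simp add: stp_def split: option.splits)
next
  case (Suc t)
  show ?case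
  proof (cases "\<pi> \<psi>")
    case None thus ?thesis by (simp add: stp_def)
  next
    case (Some e)
    have a: "run (Suc (Suc t)) \<pi> \<phi> \<psi> = (if e \<in> dom \<psi> then \<psi> else run (Suc t) \<pi> \<phi> (\<psi>(e \<mapsto> \<phi> e)))"
      using Some by simp
    have b: "run (Suc t) \<pi> \<phi> \<psi> = (if e \<in> dom \<psi> then \<psi> else run t \<pi> \<phi> (\<psi>(e \<mapsto> \<phi> e)))"
      using Some by simp
    show ?thesis
    proof (cases "e \<in> dom \<psi>")
      case True thus ?thesis using a b Some by (simp add: stp_def)
    next
      case False
      have "run (Suc (Suc t)) \<pi> \<phi> \<psi> = run (Suc t) \<pi> \<phi> (\<psi>(e \<mapsto> \<phi> e))" using a False by simp
      also have "\<dots> = stp \<pi> \<phi> (run t \<pi> \<phi> (\<psi>(e \<mapsto> \<phi> e)))" by (rule Suc)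
      also have "run t \<pi> \<phi> (\<psi>(e \<mapsto> \<phi> e)) = run (Suc t) \<pi> \<phi> \<psi>" using b False by simp
      finally show ?thesis .
    qed
  qed
qed

lemma run_dom_mono: "dom \<chi> \<subseteq> dom (run n \<pi> \<phi> \<chi>)"
proof (induction n arbitrary: \<chi>)
  case 0 thus ?case by simp
next
  case (Suc n)
  thus ?case by (auto split: option.splits simp: subset_iff dom_def)
qed

lemma map_le_upd_new: "e \<notin> dom \<psi> \<Longrightarrow> \<psi> \<subseteq>\<^sub>m \<psi>(e\<mapsto>v)"
  by (auto simp: map_le_def)

lemma stp_le: "\<psi> \<subseteq>\<^sub>m stp \<pi> \<phi> \<psi>"
  by (auto simp: stp_def map_le_def split: option.splits)



lemma adv:
  assumes pr: "prior pr" and sub: "wc_submodular pr f" and mdp: "minimal_dependency pr f"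
  shows "valid pr \<Psi> \<Longrightarrow> \<chi> \<subseteq>\<^sub>m \<Psi> \<Longrightarrow> \<exists>\<phi>'. pr \<phi>' > 0 \<and> consistent \<phi>' \<Psi> \<and>
    (\<exists>W. (\<forall>e\<in>dom (run n \<pi> \<phi>' \<chi>) - dom \<Psi>. \<forall>\<rho>. valid pr \<rho> \<and> \<rho> \<subseteq>\<^sub>m \<Psi> \<longrightarrow> W e \<le> fwc_marg pr f e \<rho>) \<and>
       f (dom (run n \<pi> \<phi>' \<chi>) \<union> dom \<Psi>) \<phi>' \<le> f (dom \<Psi>) \<phi>' + (\<Sum>e\<in>dom (run n \<pi> \<phi>' \<chi>) - dom \<Psi>. W e))"
proof (induction n arbitrary: \<chi> \<Psi>)
  case 0
  obtain \<phi>' where p: "pr \<phi>'>0" "consistent \<phi>' \<Psi>" using valid_ex pr 0 by blast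
  have "dom \<chi> \<subseteq> dom \<Psi>" using 0(2) by (rule map_le_implies_dom_le)
  hence "dom \<chi> \<union> dom \<Psi> = dom \<Psi>" "dom \<chi> - dom \<Psi> = {}" by auto
  thus ?case using p by (intro exI[of _ \<phi>']) (auto intro!: exI[of _ "\<lambda>_. 0"])
next
  case (Suc m)
  have triv: "?case" if p: "pr \<phi>'>0" "consistent \<phi>' \<Psi>" and sub1: "dom (run (Suc m) \<pi> \<phi>' \<chi>) \<subseteq> dom \<Psi>" for \<phi>'
  proof -
    have "dom (run (Suc m) \<pi> \<phi>' \<chi>) \<union> dom \<Psi> = dom \<Psi>" "dom (run (Suc m) \<pi> \<phi>' \<chi>) - dom \<Psi> = {}"
      using sub1 by auto
    thus ?thesis using p by (intro exI[of _ \<phi>']) (auto intro!: exI[of _ "\<lambda>_. 0"])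
  qed
  obtain \<phi>0 where p0: "pr \<phi>0>0" "consistent \<phi>0 \<Psi>" using valid_ex pr Suc.prems(1) by blast
  have dchi: "dom \<chi> \<subseteq> dom \<Psi>" using Suc.prems(2) by (rule map_le_implies_dom_le)
  show ?case
  proof (cases "\<pi> \<chi>")
    case None
    thus ?thesis using triv[OF p0] dchi by simp
  next
    case (Some e)
    show ?thesis
    proof (cases "e \<in> dom \<chi>")
      case True
      thus ?thesis using triv[OF p0] dchi Some by simp
    next
      case enc: False
      show ?thesis
      proof (cases "e \<in> dom \<Psi>")
        case True
        then obtain s where s: "\<Psi> e = Some s" by auto
        have le': "\<chi>(e \<mapsto> s) \<subseteq>\<^sub>m \<Psi>" using Suc.prems(2) s by (auto simp: map_le_def)
        obtain \<phi>' where P: "pr \<phi>' > 0 \<and> consistent \<phi>' \<Psi> \<and>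
          (\<exists>W. (\<forall>e\<in>dom (run m \<pi> \<phi>' (\<chi>(e \<mapsto> s))) - dom \<Psi>. \<forall>\<rho>. valid pr \<rho> \<and> \<rho> \<subseteq>\<^sub>m \<Psi> \<longrightarrow> W e \<le> fwc_marg pr f e \<rho>) \<and>
          f (dom (run m \<pi> \<phi>' (\<chi>(e \<mapsto> s))) \<union> dom \<Psi>) \<phi>' \<le> f (dom \<Psi>) \<phi>' + (\<Sum>e\<in>dom (run m \<pi> \<phi>' (\<chi>(e \<mapsto> s))) - dom \<Psi>. W e))"
          using Suc.IH[OF Suc.prems(1) le'] by blast
        have "\<phi>' e = s" using P s True unfolding consistent_def by auto
        hence "run (Suc m) \<pi> \<phi>' \<chi> = run m \<pi> \<phi>' (\<chi>(e \<mapsto> s))" using Some enc by simp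
        thus ?thesis using P by metis
      next
        case enP: False
        obtain s where s: "s \<in> states_at pr e \<Psi>" and smin: "fwc_marg pr f e \<Psi> =
           cond_f pr f (insert e (dom \<Psi>)) (\<Psi>(e\<mapsto>s)) - cond_f pr f (dom \<Psi>) \<Psi>"
          using fwc_attain[OF pr Suc.prems(1)] by blast
        define \<Psi>' where "\<Psi>' = \<Psi>(e \<mapsto> s)"
        have val': "valid pr \<Psi>'" using states_cons[OF s] pos_valid[OF pr] unfolding \<Psi>'_def by blast
        have le': "\<chi>(e \<mapsto> s) \<subseteq>\<^sub>m \<Psi>'" using Suc.prems(2) unfolding \<Psi>'_def by (auto simp: map_le_def)
        have PsiPsi': "\<Psi> \<subseteq>\<^sub>m \<Psi>'" unfolding \<Psi>'_def using enP by (rule map_le_upd_new)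
        obtain \<phi>' W where p': "pr \<phi>' > 0" "consistent \<phi>' \<Psi>'"
          and Wb: "\<forall>x\<in>dom (run m \<pi> \<phi>' (\<chi>(e \<mapsto> s))) - dom \<Psi>'. \<forall>\<rho>. valid pr \<rho> \<and> \<rho> \<subseteq>\<^sub>m \<Psi>' \<longrightarrow> W x \<le> fwc_marg pr f x \<rho>"
          and fb: "f (dom (run m \<pi> \<phi>' (\<chi>(e \<mapsto> s))) \<union> dom \<Psi>') \<phi>' \<le> f (dom \<Psi>') \<phi>' + (\<Sum>x\<in>dom (run m \<pi> \<phi>' (\<chi>(e \<mapsto> s))) - dom \<Psi>'. W x)"
          using Suc.IH[OF val' le'] by blast
        have pe: "\<phi>' e = s" using p'(2) unfolding \<Psi>'_def consistent_def by auto
        have cP: "consistent \<phi>' \<Psi>" unfolding consistent_def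
        proof
          fix x assume x: "x \<in> dom \<Psi>"
          hence xe: "x \<noteq> e" using enP by auto
          have "x \<in> dom \<Psi>'" using x unfolding \<Psi>'_def by auto
          hence "\<Psi>' x = Some (\<phi>' x)" using p'(2) unfolding consistent_def by blast
          thus "\<Psi> x = Some (\<phi>' x)" using xe unfolding \<Psi>'_def by simp
        qed
        define D where "D = dom (run m \<pi> \<phi>' (\<chi>(e \<mapsto> s)))"
        have runeq: "run (Suc m) \<pi> \<phi>' \<chi> = run m \<pi> \<phi>' (\<chi>(e \<mapsto> s))" using Some enc pe by simp
        have eD: "e \<in> D" unfolding D_def using run_dom_mono[of "\<chi>(e \<mapsto> s)" m \<pi> \<phi>'] by auto
        have domP': "dom \<Psi>' = insert e (dom \<Psi>)" unfolding \<Psi>'_def by simp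
        have U: "D \<union> dom \<Psi>' = D \<union> dom \<Psi>" using eD domP' by auto
        have Dm: "D - dom \<Psi> = insert e (D - dom \<Psi>')" using eD domP' enP by auto
        have eno: "e \<notin> D - dom \<Psi>'" using domP' by auto
        define W' where "W' = W(e := fwc_marg pr f e \<Psi>)"
        have sumeq: "(\<Sum>x\<in>D - dom \<Psi>. W' x) = fwc_marg pr f e \<Psi> + (\<Sum>x\<in>D - dom \<Psi>'. W x)"
        proof -
          have "(\<Sum>x\<in>D - dom \<Psi>. W' x) = W' e + (\<Sum>x\<in>D - dom \<Psi>'. W' x)"
            unfolding Dm by (rule sum.insert) (use eno in auto)
          also have "(\<Sum>x\<in>D - dom \<Psi>'. W' x) = (\<Sum>x\<in>D - dom \<Psi>'. W x)"
            by (rule sum.cong) (use eno in \<open>auto simp: W'_def\<close>)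
          finally show ?thesis by (simp add: W'_def)
        qed
        have c1: "cond_f pr f (dom \<Psi>') \<Psi>' = f (dom \<Psi>') \<phi>'" by (rule md[OF mdp pr p'])
        have c2: "cond_f pr f (dom \<Psi>) \<Psi> = f (dom \<Psi>) \<phi>'" by (rule md[OF mdp pr p'(1) cP])
        have gain: "f (dom \<Psi>') \<phi>' = f (dom \<Psi>) \<phi>' + fwc_marg pr f e \<Psi>"
          using smin c1 c2 domP' unfolding \<Psi>'_def by simp
        have W'b: "\<forall>x\<in>D - dom \<Psi>. \<forall>\<rho>. valid pr \<rho> \<and> \<rho> \<subseteq>\<^sub>m \<Psi> \<longrightarrow> W' x \<le> fwc_marg pr f x \<rho>"
        proof (intro ballI allI impI)
          fix x \<rho> assume x: "x \<in> D - dom \<Psi>" and r: "valid pr \<rho> \<and> \<rho> \<subseteq>\<^sub>m \<Psi>"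
          show "W' x \<le> fwc_marg pr f x \<rho>"
          proof (cases "x = e")
            case True
            thus ?thesis using sub enP r Suc.prems(1) unfolding wc_submodular_def W'_def by auto
          next
            case False
            hence "x \<in> D - dom \<Psi>'" using x Dm by auto
            moreover have "\<rho> \<subseteq>\<^sub>m \<Psi>'" using r PsiPsi' map_le_trans by blast
            ultimately show ?thesis using Wb r False unfolding D_def W'_def by auto
          qed
        qed
        have "f (D \<union> dom \<Psi>) \<phi>' \<le> f (dom \<Psi>) \<phi>' + (\<Sum>x\<in>D - dom \<Psi>. W' x)"
          using fb U gain sumeq unfolding D_def by simp
        thus ?thesis using p'(1) cP W'b runeq unfolding D_def by metis
      qed
    qed
  qed
qed



lemma abel_gen:
  fixes \<tau> :: "'a \<Rightarrow> nat" and \<delta> :: "nat \<Rightarrow> real"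
  assumes fin: "finite A" and cnt: "\<And>t. t < T \<Longrightarrow> card {e\<in>A. \<tau> e < Suc t} \<le> k * Suc t"
    and dec: "\<And>t. Suc t < T \<Longrightarrow> \<delta> (Suc t) \<le> \<delta> t"
  shows "t < T \<Longrightarrow> (\<Sum>e\<in>{e\<in>A. \<tau> e < Suc t}. \<delta> (\<tau> e))
     + (real (k * Suc t) - real (card {e\<in>A. \<tau> e < Suc t})) * \<delta> t \<le> real k * (\<Sum>s<Suc t. \<delta> s)"
proof (induction t)
  case 0
  have "(\<Sum>e\<in>{e\<in>A. \<tau> e < Suc 0}. \<delta> (\<tau> e)) = (\<Sum>e\<in>{e\<in>A. \<tau> e < Suc 0}. \<delta> 0)"
    by (rule sum.cong) auto
  thus ?case by (simp add: algebra_simps)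
next
  case (Suc t)
  define A1 where "A1 = {e\<in>A. \<tau> e < Suc t}"
  define A2 where "A2 = {e\<in>A. \<tau> e = Suc t}"
  have split: "{e\<in>A. \<tau> e < Suc (Suc t)} = A1 \<union> A2" unfolding A1_def A2_def by auto
  have disj: "A1 \<inter> A2 = {}" unfolding A1_def A2_def by auto
  have f1: "finite A1" "finite A2" using fin unfolding A1_def A2_def by auto
  have s2: "(\<Sum>e\<in>A2. \<delta> (\<tau> e)) = real (card A2) * \<delta> (Suc t)"
  proof -
    have "(\<Sum>e\<in>A2. \<delta> (\<tau> e)) = (\<Sum>e\<in>A2. \<delta> (Suc t))" by (rule sum.cong) (auto simp: A2_def)
    thus ?thesis by simp
  qed
  have S: "(\<Sum>e\<in>{e\<in>A. \<tau> e < Suc (Suc t)}. \<delta> (\<tau> e)) = (\<Sum>e\<in>A1. \<delta> (\<tau> e)) + real (card A2) * \<delta> (Suc t)"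
    unfolding split using sum.union_disjoint[OF f1 disj, of "\<lambda>e. \<delta> (\<tau> e)"] s2 by simp
  have C: "card {e\<in>A. \<tau> e < Suc (Suc t)} = card A1 + card A2"
    unfolding split using card_Un_disjoint[OF f1 disj] by simp
  have IH: "(\<Sum>e\<in>A1. \<delta> (\<tau> e)) + (real (k * Suc t) - real (card A1)) * \<delta> t \<le> real k * (\<Sum>s<Suc t. \<delta> s)"
    using Suc.IH Suc.prems unfolding A1_def by simp
  have c0: "card A1 \<le> k * Suc t" using cnt[of t] Suc.prems unfolding A1_def by simp
  have c1: "real (card A1) \<le> real (k * Suc t)" using c0 by (simp only: of_nat_le_iff)
  have d: "\<delta> (Suc t) \<le> \<delta> t" using dec Suc.prems by simp
  have prod: "(real (k * Suc t) - real (card A1)) * \<delta> (Suc t) \<le> (real (k * Suc t) - real (card A1)) * \<delta> t"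
    by (rule mult_left_mono) (use c1 d in auto)
  have "real (k * Suc (Suc t)) = real (k * Suc t) + real k" by (simp add: algebra_simps)
  thus ?case using S C IH prod by (simp add: algebra_simps)
qed

lemma abel:
  fixes \<tau> :: "'a \<Rightarrow> nat" and \<delta> :: "nat \<Rightarrow> real"
  assumes fin: "finite A" and lt: "\<And>e. e \<in> A \<Longrightarrow> \<tau> e < T"
    and cnt: "\<And>t. t < T \<Longrightarrow> card {e\<in>A. \<tau> e < Suc t} \<le> k * Suc t"
    and dec: "\<And>t. Suc t < T \<Longrightarrow> \<delta> (Suc t) \<le> \<delta> t" and nn: "\<And>t. t < T \<Longrightarrow> 0 \<le> \<delta> t"
  shows "(\<Sum>e\<in>A. \<delta> (\<tau> e)) \<le> real k * (\<Sum>t<T. \<delta> t)"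
proof (cases T)
  case 0
  hence "A = {}" using lt by auto
  thus ?thesis using 0 by simp
next
  case (Suc T')
  have AA: "{e\<in>A. \<tau> e < Suc T'} = A" using lt Suc by auto
  have g: "(\<Sum>e\<in>A. \<delta> (\<tau> e)) + (real (k * Suc T') - real (card A)) * \<delta> T' \<le> real k * (\<Sum>s<Suc T'. \<delta> s)"
    using abel_gen[where A=A and \<tau>=\<tau> and k=k and T=T and \<delta>=\<delta>, OF fin cnt dec, of T'] Suc AA by simp
  have cA: "card A \<le> k * Suc T'" using cnt[of T'] Suc AA by simp
  hence "real (card A) \<le> real (k * Suc T')" by (simp only: of_nat_le_iff)
  hence "0 \<le> (real (k * Suc T') - real (card A)) * \<delta> T'"
    using nn[of T'] Suc by (intro mult_nonneg_nonneg) auto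
  thus ?thesis using g Suc by simp
qed

lemma base_ext:
  fixes R X :: "'e::finite set"
  assumes "X \<subseteq> R" "X \<in> I" shows "\<exists>B. is_base I R B \<and> X \<subseteq> B"
proof -
  let ?C = "{Y. X \<subseteq> Y \<and> Y \<subseteq> R \<and> Y \<in> I}"
  have fin: "finite ?C" by simp
  have ne: "?C \<noteq> {}" using assms by auto
  have "Max (card ` ?C) \<in> card ` ?C" by (rule Max_in) (use fin ne in simp_all)
  then obtain B where B: "B \<in> ?C" "card B = Max (card ` ?C)" by (auto simp del: Collect_mem_eq)
  have mx: "card Y \<le> card B" if "Y \<in> ?C" for Y
    unfolding B(2) by (rule Max_ge) (use fin that in simp_all)
  have "is_base I R B" unfolding is_base_def
  proof (intro conjI allI impI)
    show "B \<subseteq> R" "B \<in> I" using B(1) by auto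
    fix B' assume b': "B \<subset> B' \<and> B' \<subseteq> R"
    show "B' \<notin> I"
    proof
      assume "B' \<in> I"
      hence "B' \<in> ?C" using b' B(1) by auto
      hence "card B' \<le> card B" by (rule mx)
      moreover have "card B < card B'" using b' by (intro psubset_card_mono) auto
      ultimately show False by simp
    qed
  qed
  thus ?thesis using B(1) by auto
qed

lemma charging:
  fixes G :: "nat \<Rightarrow> 'e::finite set" and \<delta> :: "nat \<Rightarrow> real" and W :: "'e \<Rightarrow> real"
  assumes ps: "p_system k I" and Op: "Op \<in> I"
    and GI: "\<And>t. t \<le> T \<Longrightarrow> G t \<in> I" and Gc: "\<And>t. t \<le> T \<Longrightarrow> card (G t) = t"
    and Gm: "\<And>s t. s \<le> t \<Longrightarrow> t \<le> T \<Longrightarrow> G s \<subseteq> G t"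
    and stop: "\<And>e. e \<notin> G T \<Longrightarrow> insert e (G T) \<notin> I"
    and Wb: "\<And>t e. t < T \<Longrightarrow> e \<in> Op - G T \<Longrightarrow> e \<notin> G t \<Longrightarrow> insert e (G t) \<in> I \<Longrightarrow> W e \<le> \<delta> t"
    and dec: "\<And>t. Suc t < T \<Longrightarrow> \<delta> (Suc t) \<le> \<delta> t" and nn: "\<And>t. t < T \<Longrightarrow> 0 \<le> \<delta> t"
  shows "(\<Sum>e\<in>Op - G T. W e) \<le> real k * (\<Sum>t<T. \<delta> t)"
proof -
  have ind: "indep_system I" using ps unfolding p_system_def by blast
  have down: "\<And>A B. B \<in> I \<Longrightarrow> A \<subseteq> B \<Longrightarrow> A \<in> I" using ind unfolding indep_system_def by blast
  have pk: "\<And>R. k * Min (card ` {B. is_base I R B}) \<ge> Max (card ` {B. is_base I R B})"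
    using ps unfolding p_system_def by blast
  have G0: "G 0 = {}" using Gc[of 0] by simp
  define O' where "O' = Op - G T"
  define \<tau> where "\<tau> e = (LEAST t. insert e (G (Suc t)) \<notin> I)" for e
  have ex: "\<exists>t. t < T \<and> insert e (G (Suc t)) \<notin> I" if e: "e \<in> O'" for e
  proof (cases T)
    case 0
    have "insert e (G T) \<in> I" using 0 G0 e down[OF Op, of "{e}"] unfolding O'_def by auto
    moreover have "e \<notin> G T" using e unfolding O'_def by auto
    ultimately show ?thesis using stop by blast
  next
    case (Suc T')
    have "e \<notin> G T" using e unfolding O'_def by blast
    hence "insert e (G (Suc T')) \<notin> I" using stop Suc by simp
    thus ?thesis using Suc by blast
  qed
  have \<tau>lt: "\<tau> e < T" if e: "e \<in> O'" for e
  proof -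
    obtain t where t: "t < T" "insert e (G (Suc t)) \<notin> I" using ex[OF e] by blast
    have "\<tau> e \<le> t" unfolding \<tau>_def by (rule Least_le) (rule t(2))
    thus ?thesis using t by simp
  qed
  have \<tau>not: "insert e (G (Suc (\<tau> e))) \<notin> I" if "e \<in> O'" for e
    using ex[OF that] unfolding \<tau>_def by (metis (mono_tags, lifting) LeastI_ex)
  have \<tau>in: "insert e (G (\<tau> e)) \<in> I" if e: "e \<in> O'" for e
  proof (cases "\<tau> e")
    case 0
    thus ?thesis using G0 e down[OF Op, of "{e}"] unfolding O'_def by auto
  next
    case (Suc j)
    hence "j < \<tau> e" by simp
    hence "\<not> (insert e (G (Suc j)) \<notin> I)" unfolding \<tau>_def by (rule not_less_Least)
    thus ?thesis using Suc by simp
  qed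
  have W\<tau>: "W e \<le> \<delta> (\<tau> e)" if e: "e \<in> O'" for e
  proof -
    have "G (\<tau> e) \<subseteq> G T" using Gm \<tau>lt[OF e] by simp
    hence "e \<notin> G (\<tau> e)" using e unfolding O'_def by auto
    thus ?thesis using Wb[OF \<tau>lt[OF e] _ _ \<tau>in[OF e]] e unfolding O'_def by blast
  qed
  have cnt: "card {e\<in>O'. \<tau> e < Suc t} \<le> k * Suc t" if t: "t < T" for t
  proof -
    define A where "A = {e\<in>O'. \<tau> e < Suc t}"
    define H where "H = G (Suc t)"
    have Anot: "insert e H \<notin> I" if e: "e \<in> A" for e
    proof
      assume h: "insert e H \<in> I"
      have "G (Suc (\<tau> e)) \<subseteq> H" unfolding H_def using e t by (intro Gm) (auto simp: A_def)
      hence "insert e (G (Suc (\<tau> e))) \<in> I" using down[OF h] by blast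
      thus False using \<tau>not e by (auto simp: A_def)
    qed
    have Hb: "is_base I (H \<union> A) H" unfolding is_base_def
    proof (intro conjI allI impI)
      show "H \<subseteq> H \<union> A" by auto
      show "H \<in> I" unfolding H_def using GI t by simp
      fix B' assume b: "H \<subset> B' \<and> B' \<subseteq> H \<union> A"
      then obtain x where x: "x \<in> B'" "x \<notin> H" by auto
      hence xA: "x \<in> A" using b by auto
      show "B' \<notin> I"
      proof
        assume "B' \<in> I"
        moreover have "insert x H \<subseteq> B'" using b x by blast
        ultimately have "insert x H \<in> I" by (rule down)
        thus False using Anot[OF xA] by simp
      qed
    qed
    have AI: "A \<in> I" using down[OF Op] unfolding A_def O'_def by auto
    obtain B where B: "is_base I (H \<union> A) B" "A \<subseteq> B" using base_ext[of A "H \<union> A" I] AI by auto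
    let ?Bs = "{B. is_base I (H \<union> A) B}"
    have finBs: "finite (card ` ?Bs)" by simp
    have "card A \<le> card B" using B(2) by (simp add: card_mono)
    also have "\<dots> \<le> Max (card ` ?Bs)" using B(1) finBs by (intro Max_ge) auto
    also have "\<dots> \<le> k * Min (card ` ?Bs)" by (rule pk)
    also have "\<dots> \<le> k * card H" using Hb finBs by (intro mult_le_mono2 Min_le) auto
    also have "card H = Suc t" unfolding H_def using Gc t by simp
    finally show ?thesis unfolding A_def .
  qed
  have "(\<Sum>e\<in>O'. W e) \<le> (\<Sum>e\<in>O'. \<delta> (\<tau> e))" by (rule sum_mono) (rule W\<tau>)
  also have "\<dots> \<le> real k * (\<Sum>t<T. \<delta> t)"
    by (rule abel[where T=T]) (use \<tau>lt cnt dec nn in auto)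
  finally show ?thesis unfolding O'_def .
qed



lemma dom_upd_some: "dom (m(x \<mapsto> y)) = insert x (dom m)" by simp

lemma greedy_bound:
  fixes I :: "('e::finite) set set" and pr :: "('e \<Rightarrow> 'o::finite) \<Rightarrow> real"
    and \<pi>w \<pi>opt :: "('e, 'o) policy"
  assumes ps: "p_system k I" and pr: "prior pr" and fnn: "\<forall>S \<phi>. f S \<phi> \<ge> 0"
    and mon: "wc_monotone pr f" and sub: "wc_submodular pr f" and mdp: "minimal_dependency pr f"
    and gr: "wc_greedy I pr f \<pi>w" and opt: "optimal_wc_policy I pr f \<pi>opt" and pos: "pr \<phi> > 0"
  shows "fwc_policy pr f \<pi>opt \<le> (real k + 1) * f (items_sel \<pi>w \<phi>) \<phi>"
proof -
  have ind: "indep_system I" using ps unfolding p_system_def by blast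
  have down: "\<And>A B. B \<in> I \<Longrightarrow> A \<subseteq> B \<Longrightarrow> A \<in> I" using ind unfolding indep_system_def by blast
  have emp: "{} \<in> I" using ind unfolding indep_system_def by blast
  define gs where "gs t = run t \<pi>w \<phi> Map.empty" for t
  have gsS: "gs (Suc t) = stp \<pi>w \<phi> (gs t)" for t unfolding gs_def by (rule run_Suc2)
  have cons: "consistent \<phi> (gs t)" for t
  proof (induction t)
    case 0 thus ?case by (simp add: gs_def consistent_def)
  next
    case (Suc t) thus ?case unfolding gsS stp_def
      by (auto split: option.splits intro: consistent_upd)
  qed
  have val: "valid pr (gs t)" for t by (rule pos_valid[OF pr pos cons])
  have gstep: "\<exists>e. \<pi>w (gs t) = Some e \<and> e \<in> cand I (gs t) \<and>
      (\<forall>e'\<in>cand I (gs t). fwc_marg pr f e' (gs t) \<le> fwc_marg pr f e (gs t)) \<and> gs (Suc t) = (gs t)(e \<mapsto> \<phi> e)"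
    if c: "cand I (gs t) \<noteq> {}" for t
  proof -
    obtain e where e: "\<pi>w (gs t) = Some e" "e \<in> cand I (gs t)"
      "\<forall>e'\<in>cand I (gs t). fwc_marg pr f e' (gs t) \<le> fwc_marg pr f e (gs t)"
      using gr val[of t] c unfolding wc_greedy_def by blast
    have "e \<notin> dom (gs t)" using e(2) by (simp add: cand_def)
    hence "gs (Suc t) = (gs t)(e \<mapsto> \<phi> e)" using e(1) by (simp add: gsS stp_def)
    thus ?thesis using e by blast
  qed
  have gstop: "gs (Suc t) = gs t" if c: "cand I (gs t) = {}" for t
  proof -
    have "\<pi>w (gs t) = None" using gr val[of t] c unfolding wc_greedy_def by blast
    thus ?thesis by (simp add: gsS stp_def)
  qed
  have gsI: "dom (gs t) \<in> I" for t
  proof (induction t)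
    case 0 thus ?case using emp by (simp add: gs_def)
  next
    case (Suc t)
    show ?case
    proof (cases "cand I (gs t) = {}")
      case True thus ?thesis using gstop Suc by simp
    next
      case False
      then obtain e where e: "e \<in> cand I (gs t)" "gs (Suc t) = (gs t)(e \<mapsto> \<phi> e)" using gstep by blast
      have "dom (gs (Suc t)) = insert e (dom (gs t))" by (simp only: e(2) dom_upd_some)
      thus ?thesis using e(1) by (simp add: cand_def)
    qed
  qed
  have gscard: "(\<forall>s<t. cand I (gs s) \<noteq> {}) \<longrightarrow> card (dom (gs t)) = t" for t
  proof (induction t)
    case 0 thus ?case by (simp add: gs_def)
  next
    case (Suc t)
    show ?case
    proof
      assume a: "\<forall>s<Suc t. cand I (gs s) \<noteq> {}"
      then obtain e where e: "e \<in> cand I (gs t)" "gs (Suc t) = (gs t)(e \<mapsto> \<phi> e)" using gstep by blast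
      have "card (dom (gs t)) = t" using Suc a by simp
      moreover have "dom (gs (Suc t)) = insert e (dom (gs t))" by (simp only: e(2) dom_upd_some)
      ultimately show "card (dom (gs (Suc t))) = Suc t" using e(1) by (simp add: cand_def)
    qed
  qed
  have exstop: "\<exists>t. cand I (gs t) = {}"
  proof (rule ccontr)
    assume "\<not> ?thesis"
    hence "card (dom (gs (Suc (card (UNIV :: 'e set))))) = Suc (card (UNIV :: 'e set))" using gscard by blast
    moreover have "card (dom (gs (Suc (card (UNIV :: 'e set))))) \<le> card (UNIV :: 'e set)" by (rule card_mono) auto
    ultimately show False by simp
  qed
  define T where "T = (LEAST t. cand I (gs t) = {})"
  have candT: "cand I (gs T) = {}" unfolding T_def using exstop by (rule LeastI_ex)
  have candlt: "cand I (gs t) \<noteq> {}" if "t < T" for t using not_less_Least[OF that[unfolded T_def]] by simp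
  have cardT: "card (dom (gs t)) = t" if "t \<le> T" for t using gscard candlt that by auto
  have T_le: "T \<le> card (UNIV :: 'e set)"
  proof -
    have "card (dom (gs T)) \<le> card (UNIV :: 'e set)" by (rule card_mono) auto
    thus ?thesis using cardT by simp
  qed
  have after: "gs t = gs T" if "T \<le> t" for t
    using that
  proof (induction t rule: dec_induct)
    case base thus ?case by simp
  next
    case (step t) thus ?case using gstop candT by simp
  qed
  have items: "items_sel \<pi>w \<phi> = dom (gs T)"
    unfolding items_sel_def using after[OF T_le] by (simp add: gs_def)
  have gsle1: "gs t \<subseteq>\<^sub>m gs (Suc t)" for t unfolding gsS by (rule stp_le)
  have gsmono: "gs s \<subseteq>\<^sub>m gs t" if "s \<le> t" for s t
    using that
  proof (induction t rule: dec_induct)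
    case base thus ?case by (rule map_le_refl)
  next
    case (step t) thus ?case using gsle1 map_le_trans by blast
  qed
  define el where "el t = the (\<pi>w (gs t))" for t
  define \<delta> where "\<delta> t = fwc_marg pr f (el t) (gs t)" for t
  have elp: "el t \<in> cand I (gs t) \<and> (\<forall>e'\<in>cand I (gs t). fwc_marg pr f e' (gs t) \<le> \<delta> t)
     \<and> gs (Suc t) = (gs t)(el t \<mapsto> \<phi> (el t))" if "t < T" for t
    using gstep[OF candlt[OF that]] unfolding el_def \<delta>_def by auto
  have nn: "0 \<le> \<delta> t" if "t < T" for t
    using mon val[of t] elp[OF that] unfolding wc_monotone_def \<delta>_def cand_def by blast
  have dec: "\<delta> (Suc t) \<le> \<delta> t" if st: "Suc t < T" for t
  proof -
    let ?e = "el (Suc t)"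
    have c1: "?e \<in> cand I (gs (Suc t))" using elp[OF st] by blast
    have d: "dom (gs t) \<subseteq> dom (gs (Suc t))" using gsle1 map_le_implies_dom_le by blast
    have "\<delta> (Suc t) \<le> fwc_marg pr f ?e (gs t)"
      using sub val[of t] val[of "Suc t"] gsle1[of t] c1 unfolding wc_submodular_def \<delta>_def cand_def by blast
    also have "?e \<in> cand I (gs t)"
    proof -
      have "insert ?e (dom (gs t)) \<subseteq> insert ?e (dom (gs (Suc t)))" using d by blast
      thus ?thesis using c1 d down unfolding cand_def by blast
    qed
    hence "fwc_marg pr f ?e (gs t) \<le> \<delta> t" using elp[of t] st by simp
    finally show ?thesis .
  qed
  have sumd: "(\<Sum>s<t. \<delta> s) \<le> f (dom (gs t)) \<phi>" if "t \<le> T" for t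
    using that
  proof (induction t)
    case 0 thus ?case using fnn by (simp add: gs_def)
  next
    case (Suc t)
    hence tT: "t < T" by simp
    have en: "el t \<notin> dom (gs t)" using elp[OF tT] by (simp add: cand_def)
    have "\<delta> t \<le> f (insert (el t) (dom (gs t))) \<phi> - f (dom (gs t)) \<phi>"
      unfolding \<delta>_def by (rule fwc_le[OF pr mdp pos cons en])
    moreover have "dom (gs (Suc t)) = insert (el t) (dom (gs t))" using elp[OF tT] by (simp only: dom_upd_some)
    ultimately show ?case using Suc tT by simp
  qed
  obtain \<phi>' where p': "pr \<phi>' > 0" "consistent \<phi>' (gs T)" and
    WW: "\<exists>W. (\<forall>e\<in>dom (run (card (UNIV :: 'e set)) \<pi>opt \<phi>' Map.empty) - dom (gs T). \<forall>\<rho>. valid pr \<rho> \<and> \<rho> \<subseteq>\<^sub>m gs T \<longrightarrow> W e \<le> fwc_marg pr f e \<rho>) \<and>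
       f (dom (run (card (UNIV :: 'e set)) \<pi>opt \<phi>' Map.empty) \<union> dom (gs T)) \<phi>' \<le> f (dom (gs T)) \<phi>' + (\<Sum>e\<in>dom (run (card (UNIV :: 'e set)) \<pi>opt \<phi>' Map.empty) - dom (gs T). W e)"
    using adv[OF pr sub mdp val[of T], of Map.empty "card (UNIV :: 'e set)" \<pi>opt] by auto
  then obtain W where Wb: "\<forall>e\<in>items_sel \<pi>opt \<phi>' - dom (gs T). \<forall>\<rho>. valid pr \<rho> \<and> \<rho> \<subseteq>\<^sub>m gs T \<longrightarrow> W e \<le> fwc_marg pr f e \<rho>"
    and fb: "f (items_sel \<pi>opt \<phi>' \<union> dom (gs T)) \<phi>' \<le> f (dom (gs T)) \<phi>' + (\<Sum>e\<in>items_sel \<pi>opt \<phi>' - dom (gs T). W e)"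
    unfolding items_sel_def by blast
  define Dp where "Dp = items_sel \<pi>opt \<phi>'"
  have DpI: "Dp \<in> I" using opt p'(1) unfolding optimal_wc_policy_def feasible_def Dp_def by blast
  have "fwc_policy pr f \<pi>opt \<le> f Dp \<phi>'" unfolding fwc_policy_def Dp_def
    by (rule Min_le) (use p'(1) in auto)
  also have "\<dots> \<le> f (Dp \<union> dom (gs T)) \<phi>'" by (rule mono_f[OF pr mdp mon p'(1)]) auto
  also have "\<dots> \<le> f (dom (gs T)) \<phi>' + (\<Sum>e\<in>Dp - dom (gs T). W e)" using fb unfolding Dp_def .
  also have "f (dom (gs T)) \<phi>' = f (dom (gs T)) \<phi>"
    using md[OF mdp pr p'] md[OF mdp pr pos cons[of T]] by simp
  also have "(\<Sum>e\<in>Dp - dom (gs T). W e) \<le> real k * (\<Sum>t<T. \<delta> t)"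
  proof (rule charging[OF ps DpI, where G="\<lambda>t. dom (gs t)"])
    show "\<And>t. t \<le> T \<Longrightarrow> dom (gs t) \<in> I" using gsI by blast
    show "\<And>t. t \<le> T \<Longrightarrow> card (dom (gs t)) = t" using cardT by blast
    show "\<And>s t. s \<le> t \<Longrightarrow> t \<le> T \<Longrightarrow> dom (gs s) \<subseteq> dom (gs t)"
      using gsmono map_le_implies_dom_le by blast
    show "\<And>e. e \<notin> dom (gs T) \<Longrightarrow> insert e (dom (gs T)) \<notin> I" using candT unfolding cand_def by blast
    show "\<And>t. Suc t < T \<Longrightarrow> \<delta> (Suc t) \<le> \<delta> t" by (rule dec)
    show "\<And>t. t < T \<Longrightarrow> 0 \<le> \<delta> t" by (rule nn)
    fix t e assume t: "t < T" and e: "e \<in> Dp - dom (gs T)" and en: "e \<notin> dom (gs t)"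
      and ei: "insert e (dom (gs t)) \<in> I"
    have "W e \<le> fwc_marg pr f e (gs t)" using Wb e val[of t] gsmono[of t T] t unfolding Dp_def by auto
    also have "\<dots> \<le> \<delta> t" using elp[OF t] en ei unfolding cand_def by blast
    finally show "W e \<le> \<delta> t" .
  qed
  also have "real k * (\<Sum>t<T. \<delta> t) \<le> real k * f (dom (gs T)) \<phi>"
    using sumd[of T] by (intro mult_left_mono) auto
  finally show ?thesis unfolding items by (simp add: algebra_simps)
qed

theorem theorem1:
  fixes I :: "('e::finite) set set"
    and k :: nat
    and pr :: "('e \<Rightarrow> 'o::finite) \<Rightarrow> real"
    and f :: "'e set \<Rightarrow> ('e \<Rightarrow> 'o) \<Rightarrow> real"
    and \<pi>w \<pi>opt :: "('e, 'o) policy"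
  assumes "k \<ge> 1"
    and "p_system k I"
    and "prior pr"
    and "\<forall>S \<phi>. f S \<phi> \<ge> 0"
    and "wc_monotone pr f"
    and "wc_submodular pr f"
    and "minimal_dependency pr f"
    and "wc_greedy I pr f \<pi>w"
    and "optimal_wc_policy I pr f \<pi>opt"
  shows "fwc_policy pr f \<pi>w \<ge> fwc_policy pr f \<pi>opt / (real k + 1)"
proof -
  have ne: "{\<phi>. pr \<phi> > 0} \<noteq> {}"
  proof
    assume h: "{\<phi>. pr \<phi> > 0} = {}"
    have "\<forall>\<phi>. pr \<phi> = 0" using h assms(3) unfolding prior_def by (force simp: order.order_iff_strict)
    hence "(\<Sum>\<phi>\<in>UNIV. pr \<phi>) = 0" by simp
    thus False using assms(3) unfolding prior_def by simp
  qed
  have "fwc_policy pr f \<pi>opt / (real k + 1) \<le> Min ((\<lambda>\<phi>. f (items_sel \<pi>w \<phi>) \<phi>) ` {\<phi>. pr \<phi> > 0})"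
  proof (subst Min_ge_iff)
    show "finite ((\<lambda>\<phi>. f (items_sel \<pi>w \<phi>) \<phi>) ` {\<phi>. pr \<phi> > 0})" by simp
    show "(\<lambda>\<phi>. f (items_sel \<pi>w \<phi>) \<phi>) ` {\<phi>. pr \<phi> > 0} \<noteq> {}" using ne by simp
    show "\<forall>a\<in>(\<lambda>\<phi>. f (items_sel \<pi>w \<phi>) \<phi>) ` {\<phi>. pr \<phi> > 0}. fwc_policy pr f \<pi>opt / (real k + 1) \<le> a"
    proof
      fix a assume "a \<in> (\<lambda>\<phi>. f (items_sel \<pi>w \<phi>) \<phi>) ` {\<phi>. pr \<phi> > 0}"
      then obtain \<phi> where p: "pr \<phi> > 0" and a: "a = f (items_sel \<pi>w \<phi>) \<phi>" by auto
      have "fwc_policy pr f \<pi>opt \<le> (real k + 1) * a"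
        using greedy_bound[OF assms(2-9) p] a by simp
      thus "fwc_policy pr f \<pi>opt / (real k + 1) \<le> a" by (simp add: divide_le_eq algebra_simps)
    qed
  qed
  thus ?thesis unfolding fwc_policy_def .
qed


end
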